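(* Let $p=(p_1,p_2,p_3,p_4)$ be an ordered quadruple of distinct points of $\partial\mathbf H^2_{\mathbb C}$ and let $X_1=X(p_1,p_2,p_3,p_4)$, $X_2=X(p_1,p_3,p_2,p_4)$, $A=\mathbb A(p_1,p_2,p_3)$. Then all four points lie on a common $\mathbb R$-circle if and only if $A=0$ and $X_1,X_2$ are positive real numbers satisfying $$-2(X_1+X_2)-2X_1X_2+X_1^2+X_2^2+1=0.$$
   Context: $\mathbb C^{2,1}$ is $\mathbb C^3$ with Hermitian form $\langle Z,W\rangle=z_1\overline{w}_3+z_2\overline{w}_2+z_3\overline{w}_1$; $\mathbf H^2_{\mathbb C}$ and $\partial\mathbf H^2_{\mathbb C}$ are the negative and null lines in $\mathbb P\mathbb C^2$. An $\mathbb R$-circle is the intersection of $\partial\mathbf H^2_{\mathbb C}$ with the closure of a totally real totally geodesic 2-plane (a copy of $\mathbf H^2_{\mathbb R}$) in $\mathbf H^2_{\mathbb C}$. With null lifts $P_i$: $X(p_1,p_2,p_3,p_4)=\dfrac{\langle P_3,P_1\rangle\langle P_4,P_2\rangle}{\langle P_4,P_1\rangle\langle P_3,P_2\rangle}$ and $\mathbb A(p_1,p_2,p_3)=\arg\bigl(-\langle P_1,P_2\rangle\langle P_2,P_3\rangle\langle P_3,P_1\rangle\bigr)\in[-\pi/2,\pi/2]$. *)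

theory Defs
  imports "HOL-Analysis.Analysis"
begin

definition herm :: "complex^3 \<Rightarrow> complex^3 \<Rightarrow> complex" where
  "herm Z W = Z$1 * cnj (W$3) + Z$2 * cnj (W$2) + Z$3 * cnj (W$1)"

text \<open>A null lift of a point of the boundary of complex hyperbolic 2-space.\<close>
definition null_lift :: "complex^3 \<Rightarrow> bool" where
  "null_lift P \<longleftrightarrow> P \<noteq> 0 \<and> herm P P = 0"

definition same_point :: "complex^3 \<Rightarrow> complex^3 \<Rightarrow> bool" where
  "same_point P Q \<longleftrightarrow> (\<exists>c. c \<noteq> 0 \<and> Q = c *s P)"

definition unitary21 :: "complex^3^3 \<Rightarrow> bool" where
  "unitary21 g \<longleftrightarrow> (\<forall>V W. herm (g *v V) (g *v W) = herm V W)"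

definition real_vec :: "complex^3 \<Rightarrow> bool" where
  "real_vec v \<longleftrightarrow> (\<forall>i. v$i \<in> \<real>)"

text \<open>The standard totally real totally geodesic plane is the projectivisation of the
  negative vectors of R^3 (on which the form is real); its closure meets the boundary in
  the projectivised null nonzero real vectors.  Every totally real totally geodesic 2-plane
  is the image of it under an element g of U(2,1), so the R-circle determined by g
  consists of the points with a lift g v, v a nonzero null real vector.\<close>
definition on_Rcircle :: "complex^3^3 \<Rightarrow> complex^3 \<Rightarrow> bool" where
  "on_Rcircle g P \<longleftrightarrow>
     (\<exists>v. real_vec v \<and> v \<noteq> 0 \<and> herm v v = 0 \<and> same_point (g *v v) P)"

definition cross_ratio :: "complex^3 \<Rightarrow> complex^3 \<Rightarrow> complex^3 \<Rightarrow> complex^3 \<Rightarrow> complex" where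
  "cross_ratio P1 P2 P3 P4 =
     (herm P3 P1 * herm P4 P2) / (herm P4 P1 * herm P3 P2)"

text \<open>Cartan's angular invariant (Isabelle Arg takes values in (-pi,pi]; for
  distinct boundary points the value lies in [-pi/2,pi/2]).\<close>
definition cartan :: "complex^3 \<Rightarrow> complex^3 \<Rightarrow> complex^3 \<Rightarrow> real" where
  "cartan P1 P2 P3 = Arg (- (herm P1 P2 * herm P2 P3 * herm P3 P1))"

end

theory Submission
  imports Defs
begin

lemma herm_add_left: "herm (x + y) z = herm x z + herm y z"
  by (simp add: herm_def algebra_simps)
lemma herm_add_right: "herm z (x + y) = herm z x + herm z y"
  by (simp add: herm_def algebra_simps)
lemma herm_diff_left: "herm (x - y) z = herm x z - herm y z"
  by (simp add: herm_def algebra_simps)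
lemma herm_diff_right: "herm z (x - y) = herm z x - herm z y"
  by (simp add: herm_def algebra_simps)
lemma herm_scale_left: "herm (c *s x) y = c * herm x y"
  by (simp add: herm_def algebra_simps)
lemma herm_scale_right: "herm x (c *s y) = cnj c * herm x y"
  by (simp add: herm_def algebra_simps)
lemma herm_sym: "herm y x = cnj (herm x y)"
  by (simp add: herm_def algebra_simps)
lemma herm_zero_left[simp]: "herm 0 x = 0" by (simp add: herm_def)
lemma herm_zero_right[simp]: "herm x 0 = 0" by (simp add: herm_def)

lemmas herm_lin = herm_add_left herm_add_right herm_diff_left herm_diff_right
  herm_scale_left herm_scale_right

lemma null3: assumes "herm R R = 0" "R$3 = 0" shows "R$2 = 0"
proof -
  have "R$2 * cnj (R$2) = 0" using assms by (simp add: herm_def)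
  then show ?thesis by simp
qed

lemma vec3_eq: "(x::complex^3) = y \<longleftrightarrow> x$1 = y$1 \<and> x$2 = y$2 \<and> x$3 = y$3"
  by (simp add: vec_eq_iff forall_3)

lemma orth_null:
  assumes P: "null_lift P" and Q: "null_lift Q" and h: "herm P Q = 0"
  shows "same_point P Q"
proof -
  have PP: "herm P P = 0" "P \<noteq> 0" and QQ: "herm Q Q = 0" "Q \<noteq> 0"
    using P Q by (auto simp: null_lift_def)
  show ?thesis
  proof (cases "P$3 = 0")
    case True
    then have P2: "P$2 = 0" using null3 PP by blast
    then have P1: "P$1 \<noteq> 0" using PP True by (auto simp: vec3_eq)
    have "P$1 * cnj (Q$3) = 0" using h True P2 by (simp add: herm_def)
    then have Q3: "Q$3 = 0" using P1 by simp
    then have Q2: "Q$2 = 0" using null3 QQ by blast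
    show ?thesis unfolding same_point_def
      apply (rule exI[of _ "Q$1 / P$1"])
      using P1 QQ Q2 Q3 True P2 by (auto simp: vec3_eq)
  next
    case False
    define k where "k = Q$3 / P$3"
    define R where "R = Q - k *s P"
    have R3: "R$3 = 0" using False by (simp add: R_def k_def)
    have hQP: "herm Q P = 0" using h herm_sym[of Q P] by simp
    have RR: "herm R R = 0" unfolding R_def
      by (simp add: herm_lin PP QQ h hQP)
    have RP: "herm R P = 0" unfolding R_def by (simp add: herm_lin PP hQP)
    have R2: "R$2 = 0" using null3 RR R3 by blast
    have "R$1 * cnj (P$3) = 0" using RP R2 R3 by (simp add: herm_def)
    then have "R$1 = 0" using False by simp
    then have "R = 0" using R2 R3 by (simp add: vec3_eq)
    then have Qk: "Q = k *s P" by (simp add: R_def)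
    then have "k \<noteq> 0" using QQ by auto
    then show ?thesis unfolding same_point_def using Qk by blast
  qed
qed


definition mk3 :: "complex^3 \<Rightarrow> complex^3 \<Rightarrow> complex^3 \<Rightarrow> complex^3^3" where
  "mk3 A B C = (\<chi> i j. if j = 1 then A$i else if j = 2 then B$i else C$i)"

lemma mk3_mult: "mk3 A B C *v V = V$1 *s A + V$2 *s B + V$3 *s C"
  by (simp add: vec_eq_iff mk3_def matrix_vector_mult_def sum_3 algebra_simps)

definition vec3 :: "complex \<Rightarrow> complex \<Rightarrow> complex \<Rightarrow> complex^3" where
  "vec3 a b c = (\<chi> i. if i = 1 then a else if i = 2 then b else c)"

lemma vec3_comp[simp]: "vec3 a b c $ 1 = a" "vec3 a b c $ 2 = b" "vec3 a b c $ 3 = c"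
  by (simp_all add: vec3_def)

lemma mk3_unitary:
  assumes "herm A A = 0" "herm C C = 0" "herm A C = 1" "herm B B = 1"
    "herm A B = 0" "herm C B = 0"
  shows "unitary21 (mk3 A B C)"
proof -
  have s: "herm C A = 1" "herm B A = 0" "herm B C = 0"
    using assms herm_sym[of A C] herm_sym[of A B] herm_sym[of C B] by auto
  show ?thesis unfolding unitary21_def mk3_mult
    by (simp add: herm_lin assms s) (simp add: herm_def algebra_simps)
qed

lemma mk3_span:
  assumes "herm A A = 0" "herm C C = 0" "herm A C = 1" "herm B B = 1"
    "herm A B = 0" "herm C B = 0"
  shows "R = herm R C *s A + herm R B *s B + herm R A *s C"
proof -
  let ?g = "mk3 A B C"
  have u: "unitary21 ?g" using mk3_unitary[OF assms] .
  have lin: "linear (\<lambda>x. ?g *v x)" by simp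
  have e: "?g *v vec3 1 0 0 = A" "?g *v vec3 0 1 0 = B" "?g *v vec3 0 0 1 = C"
    by (simp_all add: mk3_mult)
  have coord: "herm (?g *v w) A = w$3" "herm (?g *v w) B = w$2" "herm (?g *v w) C = w$1" for w
    using u unfolding unitary21_def
    by (metis e herm_def vec3_comp mult_1_right mult_zero_right add_0 add_0_right complex_cnj_one complex_cnj_zero)+
  have "inj (\<lambda>x. ?g *v x)"
  proof (rule linear_injective_0[OF lin, THEN iffD2], intro allI impI)
    fix w assume "?g *v w = 0"
    then have "w$1 = 0" "w$2 = 0" "w$3 = 0" using coord[of w] by auto
    then show "w = 0" by (simp add: vec3_eq)
  qed
  then have "surj (\<lambda>x. ?g *v x)" using linear_injective_imp_surjective[OF lin] by blast
  then obtain w where w: "R = ?g *v w" by (metis surjE)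
  show ?thesis using coord[of w] unfolding w by (simp add: mk3_mult)
qed


lemma cross_scale:
  assumes "k1 \<noteq> 0" "k2 \<noteq> 0" "k3 \<noteq> 0" "k4 \<noteq> 0"
  shows "cross_ratio (k1 *s Q1) (k2 *s Q2) (k3 *s Q3) (k4 *s Q4) = cross_ratio Q1 Q2 Q3 Q4"
proof -
  let ?K = "k3 * cnj k1 * k4 * cnj k2"
  have K: "?K \<noteq> 0" using assms by simp
  have "cross_ratio (k1 *s Q1) (k2 *s Q2) (k3 *s Q3) (k4 *s Q4)
     = (?K * (herm Q3 Q1 * herm Q4 Q2)) / (?K * (herm Q4 Q1 * herm Q3 Q2))"
    unfolding cross_ratio_def by (simp add: herm_lin algebra_simps)
  also have "\<dots> = cross_ratio Q1 Q2 Q3 Q4"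
    unfolding cross_ratio_def by (rule mult_divide_mult_cancel_left[OF K])
  finally show ?thesis .
qed

lemma real_core:
  fixes r \<rho> \<xi> \<eta> :: real
  assumes "r > 0" "\<rho> > 0" "\<rho> * \<rho> = 2 * r" "2 * \<xi> + \<eta> * \<eta> = 0" "\<xi> \<noteq> 0"
    "1 - \<rho> * \<eta> / r - \<xi> / r \<noteq> 0"
  shows "- \<xi> / r > 0 \<and> 1 - \<rho> * \<eta> / r - \<xi> / r > 0 \<and>
    - 2 * (- \<xi> / r + (1 - \<rho> * \<eta> / r - \<xi> / r)) - 2 * (- \<xi> / r) * (1 - \<rho> * \<eta> / r - \<xi> / r)
    + (- \<xi> / r)\<^sup>2 + (1 - \<rho> * \<eta> / r - \<xi> / r)\<^sup>2 + 1 = 0"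
proof -
  define X1 where "X1 = - \<xi> / r"
  define X2 where "X2 = 1 - \<rho> * \<eta> / r - \<xi> / r"
  have x1: "\<xi> = - r * X1" using assms(1) by (simp add: X1_def)
  have x2: "\<rho> * \<eta> = r * (1 + X1 - X2)" using assms(1) by (simp add: X1_def X2_def field_simps)
  have "\<xi> \<le> 0" using assms(4) zero_le_square[of \<eta>] by linarith
  then have xn: "\<xi> < 0" using assms(5) by linarith
  have X1p: "X1 > 0" using xn assms(1) by (simp add: X1_def field_simps)
  have "(\<rho> * \<eta>)^2 = 2 * r * (\<eta> * \<eta>)" using assms(3) by (simp add: power2_eq_square algebra_simps)
  also have "\<dots> = 4 * r * r * X1" using assms(4) x1 by (simp add: algebra_simps)
  finally have "(r * (1 + X1 - X2))^2 = 4 * r * r * X1" using x2 by simp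
  then have E: "(1 + X1 - X2)^2 = 4 * X1" using assms(1) by (simp add: power_mult_distrib power2_eq_square)
  have X2n: "X2 \<noteq> 0" using assms(6) by (simp add: X2_def)
  have X2p: "X2 > 0"
  proof (rule ccontr)
    assume "\<not> X2 > 0" then have "X2 < 0" using X2n by simp
    then have "(1 + X1 - X2)^2 > (1 + X1)^2" using X1p by (intro power_strict_mono) auto
    moreover have "(1 + X1)^2 - 4 * X1 = (X1 - 1)^2" by (simp add: power2_eq_square algebra_simps)
    then have "(1 + X1)^2 \<ge> 4 * X1" using zero_le_power2[of "X1 - 1"] by linarith
    ultimately show False using E by simp
  qed
  have "- 2 * (X1 + X2) - 2 * X1 * X2 + X1\<^sup>2 + X2\<^sup>2 + 1 = (1 + X1 - X2)^2 - 4 * X1"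
    by (simp add: power2_eq_square algebra_simps)
  then show ?thesis using X1p X2p E unfolding X1_def[symmetric] X2_def[symmetric] by simp
qed

lemma core:
  assumes n1: "null_lift P1" and n2: "null_lift P2" and n3: "null_lift P3" and n4: "null_lift P4"
    and h12: "herm P1 P2 \<noteq> 0" and h13: "herm P3 P1 \<noteq> 0" and h14: "herm P4 P1 \<noteq> 0"
    and h23: "herm P3 P2 \<noteq> 0" and h24: "herm P4 P2 \<noteq> 0" and h34: "herm P4 P3 \<noteq> 0"
    and cart: "cartan P1 P2 P3 = 0"
    and X1R: "cross_ratio P1 P2 P3 P4 \<in> \<real>" and X2R: "cross_ratio P1 P3 P2 P4 \<in> \<real>"
  shows "Re (cross_ratio P1 P2 P3 P4) > 0 \<and> Re (cross_ratio P1 P3 P2 P4) > 0 \<and>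
     - 2 * (Re (cross_ratio P1 P2 P3 P4) + Re (cross_ratio P1 P3 P2 P4))
     - 2 * Re (cross_ratio P1 P2 P3 P4) * Re (cross_ratio P1 P3 P2 P4)
     + (Re (cross_ratio P1 P2 P3 P4))\<^sup>2 + (Re (cross_ratio P1 P3 P2 P4))\<^sup>2 + 1 = 0
   \<and> (\<exists>g. unitary21 g \<and> on_Rcircle g P1 \<and> on_Rcircle g P2 \<and>
                 on_Rcircle g P3 \<and> on_Rcircle g P4)"
proof -
  have N1: "herm P1 P1 = 0" and N2: "herm P2 P2 = 0" and N3: "herm P3 P3 = 0" and N4: "herm P4 P4 = 0"
    using n1 n2 n3 n4 by (auto simp: null_lift_def)
  define h where "h = herm P1 P2"
  define t where "t = herm P3 P1"
  define \<mu> where "\<mu> = 1 / cnj t"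
  define \<nu> where "\<nu> = cnj (1 / (\<mu> * h))"
  define E1 where "E1 = \<mu> *s P1"
  define E3 where "E3 = \<nu> *s P2"
  have hnz: "h \<noteq> 0" and tnz: "t \<noteq> 0" using h12 h13 by (auto simp: h_def t_def)
  have munz: "\<mu> \<noteq> 0" and nunz: "\<nu> \<noteq> 0" using hnz tnz by (auto simp: \<mu>_def \<nu>_def)
  have G11: "herm E1 E1 = 0" and G33: "herm E3 E3 = 0"
    by (simp_all add: E1_def E3_def herm_lin N1 N2)
  have G13: "herm E1 E3 = 1"
    using hnz tnz by (simp add: E1_def E3_def herm_lin h_def[symmetric] \<nu>_def \<mu>_def)
  have G31: "herm E3 E1 = 1" using G13 herm_sym[of E1 E3] by simp
  have c1: "herm P3 E1 = 1" using tnz by (simp add: E1_def herm_lin t_def[symmetric] \<mu>_def)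
  define a where "a = herm P3 E3"
  have T: "herm P1 P2 * herm P2 P3 * herm P3 P1 = (h * cnj h) * cnj a"
  proof -
    have "cnj a = \<nu> * herm P2 P3" unfolding a_def E3_def
      by (simp add: herm_lin herm_sym[of P3 P2])
    then show ?thesis using hnz tnz
      by (simp add: \<nu>_def \<mu>_def h_def t_def field_simps)
  qed
  have anz: "a \<noteq> 0" using h23 nunz by (simp add: a_def E3_def herm_lin)
  have "- (herm P1 P2 * herm P2 P3 * herm P3 P1) \<in> \<real> \<and> 0 \<le> Re (- (herm P1 P2 * herm P2 P3 * herm P3 P1))"
    using cart by (simp add: cartan_def Arg_eq_0)
  then have aR: "- (of_real (Re (h * cnj h)) * cnj a) \<in> \<real>" and ale: "0 \<le> Re (-(of_real (Re (h * cnj h)) * cnj a))"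
    unfolding T by (simp_all add: complex_mult_cnj)
  have hh: "Re (h * cnj h) > 0" using hnz
    by (simp add: complex_mult_cnj sum_power2_gt_zero_iff complex_eq_iff)
  have "cnj a \<in> \<real>"
  proof -
    define H where "H = Re (h * cnj h)"
    have "H \<noteq> 0" using hh unfolding H_def by linarith
    then have "cnj a = of_real (- 1 / H) * (- (of_real H * cnj a))"
      by (simp add: mult.assoc[symmetric] flip: of_real_mult)
    then show ?thesis using aR unfolding H_def by (metis Reals_mult Reals_of_real)
  qed
  then have aRe: "a \<in> \<real>" by (simp add: Reals_cnj_iff)
  then obtain r where r_def: "a = - of_real r" by (metis Reals_cases minus_minus of_real_minus)
  have "0 \<le> Re (h * cnj h) * r" using ale r_def by simp
  then have "0 \<le> r" using hh by (simp add: zero_le_mult_iff)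
  then have rpos: "r > 0" using anz r_def by (cases "r = 0") auto
  define N0 where "N0 = P3 - a *s E1 - E3"
  have N0E1: "herm N0 E1 = 0" by (simp add: N0_def herm_lin c1 G11 G31)
  have N0E3: "herm N0 E3 = 0" by (simp add: N0_def herm_lin a_def[symmetric] G13 G33)
  have N0N0: "herm N0 N0 = of_real (2 * r)"
  proof -
    have "herm E1 P3 = 1" using c1 herm_sym[of P3 E1] by simp
    moreover have "herm E3 P3 = cnj a" using herm_sym[of P3 E3] by (simp add: a_def)
    ultimately show ?thesis
      by (simp add: N0_def herm_lin N3 a_def[symmetric] c1 G11 G31 G13 G33 r_def)
  qed
  define \<rho> where "\<rho> = sqrt (2 * r)"
  have rho: "\<rho> > 0" "\<rho> * \<rho> = 2 * r" using rpos by (auto simp: \<rho>_def)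
  define N where "N = (1 / of_real \<rho>) *s N0"
  have GNN: "herm N N = 1" using rho rpos by (simp add: N_def herm_lin N0N0 flip: of_real_mult)
  have GN1: "herm E1 N = 0" using N0E1 herm_sym[of N0 E1] by (simp add: N_def herm_lin)
  have GN3: "herm E3 N = 0" using N0E3 herm_sym[of N0 E3] by (simp add: N_def herm_lin)
  have P3eq: "P3 = a *s E1 + of_real \<rho> *s N + E3"
    using rho by (simp add: N_def N0_def vec_eq_iff)
  note G = G11 G33 G13 G31 GNN GN1 GN3
  have GN1': "herm N E1 = 0" and GN3': "herm N E3 = 0"
    using GN1 GN3 herm_sym[of E1 N] herm_sym[of E3 N] by auto
  have span: "P4 = herm P4 E3 *s E1 + herm P4 N *s N + herm P4 E1 *s E3"
    by (rule mk3_span[OF G11 G33 G13 GNN GN1 GN3])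
  define x where "x = herm P4 E3"
  define y where "y = herm P4 N"
  define z where "z = herm P4 E1"
  have znz: "z \<noteq> 0" using h14 munz by (simp add: z_def E1_def herm_lin)
  have xnz: "x \<noteq> 0" using h24 nunz by (simp add: x_def E3_def herm_lin)
  have P4eq: "P4 = x *s E1 + y *s N + z *s E3" using span by (simp add: x_def y_def z_def)
  have ac: "cnj a = a" using r_def by simp
  have P1e: "P1 = (1/\<mu>) *s E1" using munz by (simp add: E1_def vec_eq_iff)
  have P2e: "P2 = (1/\<nu>) *s E3" using nunz by (simp add: E3_def vec_eq_iff)
  have one: "1 *s Q = Q" for Q :: "complex^3" by (simp add: vec_eq_iff)
  have X1e: "cross_ratio P1 P2 P3 P4 = cross_ratio E1 E3 P3 P4"
    using cross_scale[of "1/\<mu>" "1/\<nu>" 1 1 E1 E3 P3 P4] munz nunz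
    by (simp add: P1e[symmetric] P2e[symmetric] one)
  have X2e: "cross_ratio P1 P3 P2 P4 = cross_ratio E1 P3 E3 P4"
    using cross_scale[of "1/\<mu>" 1 "1/\<nu>" 1 E1 P3 E3 P4] munz nunz
    by (simp add: P1e[symmetric] P2e[symmetric] one)
  have h43: "herm P4 P3 = a * z + of_real \<rho> * y + x"
  proof -
    have "herm P4 P3 = herm P4 (a *s E1 + of_real \<rho> *s N + E3)" by (simp only: P3eq[symmetric])
    then show ?thesis by (simp add: herm_lin ac z_def y_def x_def)
  qed
  have X1v: "cross_ratio P1 P2 P3 P4 = x / (z * a)"
    unfolding X1e unfolding cross_ratio_def by (simp add: c1 x_def z_def a_def)
  have E3P3: "herm E3 P3 = a" using herm_sym[of P3 E3] ac by (simp add: a_def)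
  have X2v: "cross_ratio P1 P3 P2 P4 = (a * z + of_real \<rho> * y + x) / (z * a)"
    unfolding X2e unfolding cross_ratio_def by (simp add: G31 E3P3 h43 z_def)
  define \<xi> where "\<xi> = x / z"
  define \<eta> where "\<eta> = y / z"
  have xe: "x = \<xi> * z" and ye: "y = \<eta> * z" using znz by (simp_all add: \<xi>_def \<eta>_def)
  have X1v': "cross_ratio P1 P2 P3 P4 = \<xi> / a" using X1v znz by (simp add: xe)
  have X2v': "cross_ratio P1 P3 P2 P4 = 1 + of_real \<rho> * \<eta> / a + \<xi> / a"
  proof -
    have "a * z + of_real \<rho> * y + x = z * (a + of_real \<rho> * \<eta> + \<xi>)" by (simp add: xe ye algebra_simps)
    then have "cross_ratio P1 P3 P2 P4 = (a + of_real \<rho> * \<eta> + \<xi>) / a"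
      using X2v znz by (simp add: mult_divide_mult_cancel_left)
    then show ?thesis using anz by (simp add: add_divide_distrib)
  qed
  have "\<xi> = a * cross_ratio P1 P2 P3 P4" using X1v' anz by simp
  then have "\<xi> \<in> \<real>" using X1R aRe by simp
  then obtain \<xi>r where xr: "\<xi> = of_real \<xi>r" by (metis Reals_cases)
  have "\<eta> = (cross_ratio P1 P3 P2 P4 - 1 - \<xi> / a) * a / of_real \<rho>"
    using X2v' anz rho by (simp add: field_simps)
  then have "\<eta> \<in> \<real>" using X2R aRe \<open>\<xi> \<in> \<real>\<close> by simp
  then obtain \<eta>r where yr: "\<eta> = of_real \<eta>r" by (metis Reals_cases)
  have nullP4: "x * cnj z + y * cnj y + z * cnj x = 0"
    using N4 unfolding P4eq by (simp add: herm_lin G GN1' GN3') (simp add: algebra_simps)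
  have "(z * cnj z) * of_real (2 * \<xi>r + \<eta>r * \<eta>r) = 0"
    using nullP4 unfolding xe ye xr yr by (simp add: algebra_simps)
  then have "of_real (2 * \<xi>r + \<eta>r * \<eta>r) = (0::complex)"
    using znz by (metis (no_types) mult_eq_0_iff complex_cnj_zero_iff)
  then have nul: "2 * \<xi>r + \<eta>r * \<eta>r = 0" by (simp only: of_real_eq_0_iff)
  have xrnz: "\<xi>r \<noteq> 0" using xnz xe xr by auto
  have X1r: "cross_ratio P1 P2 P3 P4 = of_real (- \<xi>r / r)" using X1v' xr r_def by simp
  have X2r: "cross_ratio P1 P3 P2 P4 = of_real (1 - \<rho> * \<eta>r / r - \<xi>r / r)"
    using X2v' xr yr r_def by simp
  have X2nz: "cross_ratio P1 P3 P2 P4 \<noteq> 0" using X2v h43 h34 znz anz by simp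
  then have X2rnz: "1 - \<rho> * \<eta>r / r - \<xi>r / r \<noteq> 0" using X2r by (metis of_real_0)
  have R: "- \<xi>r / r > 0 \<and> 1 - \<rho> * \<eta>r / r - \<xi>r / r > 0 \<and>
    - 2 * (- \<xi>r / r + (1 - \<rho> * \<eta>r / r - \<xi>r / r)) - 2 * (- \<xi>r / r) * (1 - \<rho> * \<eta>r / r - \<xi>r / r)
    + (- \<xi>r / r)\<^sup>2 + (1 - \<rho> * \<eta>r / r - \<xi>r / r)\<^sup>2 + 1 = 0"
    by (rule real_core[OF rpos rho(1) rho(2) nul xrnz X2rnz])
  define g where "g = mk3 E1 N E3"
  have gu: "unitary21 g" unfolding g_def by (rule mk3_unitary[OF G11 G33 G13 GNN GN1 GN3])
  have rv: "real_vec (vec3 (of_real p) (of_real q) (of_real s))" for p q s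
    by (simp add: real_vec_def forall_3)
  have hv: "herm (vec3 p q s) (vec3 p q s) = p * cnj s + q * cnj q + s * cnj p" for p q s
    by (simp add: herm_def)
  have nz: "vec3 p q s \<noteq> 0" if "s \<noteq> 0" for p q s using that by (auto simp: vec3_eq)
  have nz1: "vec3 1 0 0 \<noteq> 0" by (auto simp: vec3_eq)
  have C1: "on_Rcircle g P1" unfolding on_Rcircle_def same_point_def
    apply (rule exI[of _ "vec3 (of_real 1) (of_real 0) (of_real 0)"])
    apply (intro conjI exI[of _ "1/\<mu>"])
    using rv[of 1 0 0] nz1 munz P1e by (auto simp: hv g_def mk3_mult one)
  have C2: "on_Rcircle g P2" unfolding on_Rcircle_def same_point_def
    apply (rule exI[of _ "vec3 (of_real 0) (of_real 0) (of_real 1)"])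
    apply (intro conjI exI[of _ "1/\<nu>"])
    using rv[of 0 0 1] nz[of 1] nunz P2e by (auto simp: hv g_def mk3_mult one)
  have rr: "of_real \<rho> * of_real \<rho> = (2 * of_real r :: complex)"
  proof -
    have "(of_real \<rho> * of_real \<rho> :: complex) = of_real (\<rho> * \<rho>)" by simp
    also have "\<dots> = of_real (2 * r)" using rho by simp
    finally show ?thesis by simp
  qed
  have C3: "on_Rcircle g P3" unfolding on_Rcircle_def same_point_def
    apply (rule exI[of _ "vec3 (of_real (-r)) (of_real \<rho>) (of_real 1)"])
    apply (intro conjI exI[of _ 1])
    using rv[of "-r" \<rho> 1] nz[of 1] rho P3eq r_def rr
    by (auto simp: hv g_def mk3_mult one)
  have gv4: "g *v vec3 (of_real \<xi>r) (of_real \<eta>r) 1 = \<xi> *s E1 + \<eta> *s N + E3"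
    by (simp add: g_def mk3_mult xr yr one)
  have P4z: "P4 = z *s (g *v vec3 (of_real \<xi>r) (of_real \<eta>r) 1)"
  proof -
    have "z *s (\<xi> *s E1 + \<eta> *s N + E3) = x *s E1 + y *s N + z *s E3"
      unfolding xe ye by (simp add: vec_eq_iff algebra_simps)
    then show ?thesis using P4eq gv4 by simp
  qed
  have hv4: "herm (vec3 (of_real \<xi>r) (of_real \<eta>r) 1) (vec3 (of_real \<xi>r) (of_real \<eta>r) 1)
     = of_real (2 * \<xi>r + \<eta>r * \<eta>r)"
    unfolding hv by simp
  define v4 where "v4 = vec3 (of_real \<xi>r) (of_real \<eta>r) 1"
  have v4a: "real_vec v4" unfolding v4_def using rv[of \<xi>r \<eta>r 1] by simp
  have v4b: "v4 \<noteq> 0" unfolding v4_def using nz[of 1] by simp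
  have v4c: "herm v4 v4 = 0" unfolding v4_def hv4 using nul by simp
  have v4d: "same_point (g *v v4) P4" unfolding same_point_def v4_def
    by (rule exI[of _ z], rule conjI, rule znz, rule P4z)
  have C4: "on_Rcircle g P4" unfolding on_Rcircle_def
    by (rule exI[of _ v4], intro conjI v4a v4b v4c v4d)
  have re1: "Re (cross_ratio P1 P2 P3 P4) = - \<xi>r / r" using X1r by simp
  have re2: "Re (cross_ratio P1 P3 P2 P4) = 1 - \<rho> * \<eta>r / r - \<xi>r / r" using X2r by simp
  have ex: "\<exists>g. unitary21 g \<and> on_Rcircle g P1 \<and> on_Rcircle g P2 \<and>
                 on_Rcircle g P3 \<and> on_Rcircle g P4"
    by (rule exI[of _ g], intro conjI gu C1 C2 C3 C4)
  show ?thesis unfolding re1 re2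
    by (rule conjI, rule conjunct1[OF R], rule conjI, rule conjunct1[OF conjunct2[OF R]],
        rule conjI, rule conjunct2[OF conjunct2[OF R]], rule ex)
qed

lemma sign_lemma:
  fixes a b c p q u :: real
  assumes "b*b + 2*a*c = 0" "q*q + 2*p*u = 0"
  shows "(a*u + b*q + c*p) * (a - c) * (p - u) \<le> 0"
proof -
  define A where "A = a - c" define B where "B = p - u"
  define S where "S = a + c" define Sw where "Sw = p + u"
  have hA: "A*A = 2*b*b + S*S" using assms(1) by (simp add: A_def S_def algebra_simps)
  have hB: "B*B = 2*q*q + Sw*Sw" using assms(2) by (simp add: B_def Sw_def algebra_simps)
  have h: "2*(a*u + b*q + c*p) = (2*b*q + S*Sw) - A*B" by (simp add: A_def B_def S_def Sw_def algebra_simps)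
  define U where "U = 2*b*q + S*Sw"
  have CS: "U*U \<le> (A*B)*(A*B)"
  proof -
    have "(A*B)*(A*B) = (A*A)*(B*B)" by (simp add: algebra_simps)
    then have "(A*B)*(A*B) - U*U = (2*b*b + S*S)*(2*q*q+Sw*Sw) - U*U" using hA hB by simp
    also have "\<dots> = 2*(b*Sw - q*S)^2" by (simp add: U_def power2_eq_square algebra_simps)
    finally show ?thesis by (smt (verit) zero_le_power2)
  qed
  have "U * (A*B) \<le> (A*B)*(A*B)"
  proof -
    have "\<bar>U\<bar> \<le> \<bar>A*B\<bar>" using CS by (metis abs_le_square_iff power2_eq_square)
    then have "U * (A*B) \<le> \<bar>A*B\<bar> * \<bar>A*B\<bar>" by (metis abs_ge_self abs_mult abs_mult_self_eq mult_right_mono abs_ge_zero order_trans abs_le_D1)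
    then show ?thesis by (simp add: abs_mult_self_eq)
  qed
  have "2*(a*u + b*q + c*p) * (A*B) \<le> 0" using \<open>U * (A*B) \<le> (A*B)*(A*B)\<close> unfolding h U_def[symmetric] by (simp add: algebra_simps)
  moreover have "2*(a*u + b*q + c*p) * (A*B) = 2 * ((a*u + b*q + c*p) * (A*B))" by simp
  ultimately have "(a*u + b*q + c*p) * (A*B) \<le> 0" by linarith
  moreover have "(a*u + b*q + c*p) * (a - c) * (p - u) = (a*u + b*q + c*p) * (A*B)"
    by (simp add: A_def B_def mult.assoc)
  ultimately show ?thesis by linarith
qed

lemma sp_sym: assumes "same_point P Q" shows "same_point Q P"
proof -
  obtain c where c: "c \<noteq> 0" "Q = c *s P" using assms unfolding same_point_def by blast
  have "P = (1/c) *s Q" using c by (simp add: vec_eq_iff)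
  then show ?thesis unfolding same_point_def using c(1) by (intro exI[of _ "1/c"]) simp
qed

lemma herm_nz:
  assumes "null_lift P" "null_lift Q" "\<not> same_point P Q"
  shows "herm P Q \<noteq> 0" "herm Q P \<noteq> 0"
proof -
  show h: "herm P Q \<noteq> 0" using orth_null assms by blast
  show "herm Q P \<noteq> 0" using h herm_sym[of P Q] by auto
qed

lemma real_herm:
  assumes "real_vec v" "real_vec w"
  shows "herm v w = of_real (Re (v$1) * Re (w$3) + Re (v$2) * Re (w$2) + Re (v$3) * Re (w$1))"
proof -
  have im: "Im (v$i) = 0" "Im (w$i) = 0" for i
    using assms unfolding real_vec_def by (simp_all add: complex_is_Real_iff)
  show ?thesis by (simp add: herm_def complex_eq_iff im)
qed

lemma circ_obtain:
  assumes "unitary21 g" "on_Rcircle g P"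
  obtains v c where "real_vec v" "v \<noteq> 0" "herm v v = 0" "c \<noteq> 0" "P = c *s (g *v v)"
  using assms(2) unfolding on_Rcircle_def same_point_def by blast

lemma sigma_nz:
  assumes "real_vec v" "v \<noteq> 0" "herm v v = 0"
  shows "Re (v$1) - Re (v$3) \<noteq> 0"
    and "Re (v$2) * Re (v$2) + 2 * Re (v$1) * Re (v$3) = 0"
proof -
  have im: "Im (v$i) = 0" for i using assms(1) unfolding real_vec_def by (simp add: complex_is_Real_iff)
  have "of_real (Re (v$1) * Re (v$3) + Re (v$2) * Re (v$2) + Re (v$3) * Re (v$1)) = (0::complex)"
    using assms(3) real_herm[OF assms(1) assms(1)] by simp
  then have n: "Re (v$1) * Re (v$3) + Re (v$2) * Re (v$2) + Re (v$3) * Re (v$1) = 0"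
    by (simp only: of_real_eq_0_iff)
  then show "Re (v$2) * Re (v$2) + 2 * Re (v$1) * Re (v$3) = 0" by (simp add: algebra_simps)
  show "Re (v$1) - Re (v$3) \<noteq> 0"
  proof
    assume e: "Re (v$1) - Re (v$3) = 0"
    then have "Re (v$2) * Re (v$2) + 2 * (Re (v$1) * Re (v$1)) = 0" using n by (simp add: algebra_simps)
    then have "Re (v$2) = 0" "Re (v$1) = 0"
      by (smt (verit) zero_le_square mult_eq_0_iff)+
    then have "Re (v$3) = 0" using e by simp
    then have "v = 0" using \<open>Re (v$2) = 0\<close> \<open>Re (v$1) = 0\<close> im
      by (simp add: vec3_eq complex_eq_iff)
    then show False using assms(2) by simp
  qed
qed

definition hr :: "complex^3 \<Rightarrow> complex^3 \<Rightarrow> real" where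
  "hr v w = Re (v$1) * Re (w$3) + Re (v$2) * Re (w$2) + Re (v$3) * Re (w$1)"

lemma sign_hr:
  assumes "real_vec v" "v \<noteq> 0" "herm v v = 0" "real_vec w" "w \<noteq> 0" "herm w w = 0"
    "herm v w \<noteq> 0"
  shows "hr v w * (Re (v$1) - Re (v$3)) * (Re (w$1) - Re (w$3)) < 0"
proof -
  have le: "hr v w * (Re (v$1) - Re (v$3)) * (Re (w$1) - Re (w$3)) \<le> 0"
    unfolding hr_def
    by (rule sign_lemma[OF sigma_nz(2)[OF assms(1-3)] sigma_nz(2)[OF assms(4-6)]])
  have "herm v w = of_real (hr v w)" unfolding hr_def by (rule real_herm[OF assms(1) assms(4)])
  then have "hr v w \<noteq> 0" using assms(7) by (metis of_real_0)
  then have "hr v w * (Re (v$1) - Re (v$3)) * (Re (w$1) - Re (w$3)) \<noteq> 0"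
    using sigma_nz(1)[OF assms(1-3)] sigma_nz(1)[OF assms(4-6)] by simp
  then show ?thesis using le by linarith
qed

lemma forward:
  assumes n1: "null_lift P1" and n2: "null_lift P2" and n3: "null_lift P3" and n4: "null_lift P4"
    and h12: "herm P1 P2 \<noteq> 0" and h23: "herm P2 P3 \<noteq> 0" and h31: "herm P3 P1 \<noteq> 0"
    and u: "unitary21 g" and C1: "on_Rcircle g P1" and C2: "on_Rcircle g P2"
    and C3: "on_Rcircle g P3" and C4: "on_Rcircle g P4"
  shows "cartan P1 P2 P3 = 0" "cross_ratio P1 P2 P3 P4 \<in> \<real>" "cross_ratio P1 P3 P2 P4 \<in> \<real>"
proof -
  obtain v1 c1 where v1: "real_vec v1" "v1 \<noteq> 0" "herm v1 v1 = 0" "c1 \<noteq> 0" "P1 = c1 *s (g *v v1)"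
    using circ_obtain[OF u C1] by blast
  obtain v2 c2 where v2: "real_vec v2" "v2 \<noteq> 0" "herm v2 v2 = 0" "c2 \<noteq> 0" "P2 = c2 *s (g *v v2)"
    using circ_obtain[OF u C2] by blast
  obtain v3 c3 where v3: "real_vec v3" "v3 \<noteq> 0" "herm v3 v3 = 0" "c3 \<noteq> 0" "P3 = c3 *s (g *v v3)"
    using circ_obtain[OF u C3] by blast
  obtain v4 c4 where v4: "real_vec v4" "v4 \<noteq> 0" "herm v4 v4 = 0" "c4 \<noteq> 0" "P4 = c4 *s (g *v v4)"
    using circ_obtain[OF u C4] by blast
  have U: "herm (g *v V) (g *v W) = herm V W" for V W using u unfolding unitary21_def by blast
  have hP: "herm (a *s (g *v V)) (b *s (g *v W)) = a * cnj b * herm V W" for a b V W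
    by (simp add: herm_lin U)
  have cr: "cross_ratio (g *v V1) (g *v V2) (g *v V3) (g *v V4) = cross_ratio V1 V2 V3 V4" for V1 V2 V3 V4
    unfolding cross_ratio_def U ..
  have crR: "cross_ratio V1 V2 V3 V4 \<in> \<real>" if "real_vec V1" "real_vec V2" "real_vec V3" "real_vec V4"
    for V1 V2 V3 V4
    unfolding cross_ratio_def using that by (simp add: real_herm)
  show "cross_ratio P1 P2 P3 P4 \<in> \<real>"
    unfolding v1(5) v2(5) v3(5) v4(5) cross_scale[OF v1(4) v2(4) v3(4) v4(4)] cr
    by (rule crR[OF v1(1) v2(1) v3(1) v4(1)])
  show "cross_ratio P1 P3 P2 P4 \<in> \<real>"
    unfolding v1(5) v2(5) v3(5) v4(5) cross_scale[OF v1(4) v3(4) v2(4) v4(4)] cr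
    by (rule crR[OF v1(1) v3(1) v2(1) v4(1)])
  have e12: "herm v1 v2 \<noteq> 0" using h12 by (simp add: v1(5) v2(5) hP)
  have e23: "herm v2 v3 \<noteq> 0" using h23 by (simp add: v2(5) v3(5) hP)
  have e31: "herm v3 v1 \<noteq> 0" using h31 by (simp add: v3(5) v1(5) hP)
  define s1 where "s1 = Re (v1$1) - Re (v1$3)"
  define s2 where "s2 = Re (v2$1) - Re (v2$3)"
  define s3 where "s3 = Re (v3$1) - Re (v3$3)"
  have A: "hr v1 v2 * s1 * s2 < 0" unfolding s1_def s2_def
    by (rule sign_hr[OF v1(1-3) v2(1-3) e12])
  have B: "hr v2 v3 * s2 * s3 < 0" unfolding s2_def s3_def
    by (rule sign_hr[OF v2(1-3) v3(1-3) e23])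
  have C: "hr v3 v1 * s3 * s1 < 0" unfolding s1_def s3_def
    by (rule sign_hr[OF v3(1-3) v1(1-3) e31])
  have "(hr v1 v2 * s1 * s2) * (hr v2 v3 * s2 * s3) > 0" using A B by (simp add: mult_neg_neg)
  then have "(hr v1 v2 * s1 * s2) * (hr v2 v3 * s2 * s3) * (hr v3 v1 * s3 * s1) < 0"
    using C by (simp add: mult_pos_neg)
  moreover have "(hr v1 v2 * s1 * s2) * (hr v2 v3 * s2 * s3) * (hr v3 v1 * s3 * s1)
     = (hr v1 v2 * hr v2 v3 * hr v3 v1) * ((s1 * s2 * s3) * (s1 * s2 * s3))"
    by (simp add: algebra_simps)
  moreover have "(s1 * s2 * s3) * (s1 * s2 * s3) \<ge> 0" by simp
  ultimately have Tn: "hr v1 v2 * hr v2 v3 * hr v3 v1 < 0"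
    by (metis mult_nonneg_nonneg not_less mult_nonpos_nonneg)
  define K where "K = (cmod c1)^2 * (cmod c2)^2 * (cmod c3)^2"
  have Kp: "K > 0" using v1(4) v2(4) v3(4) by (simp add: K_def)
  have cc: "c * cnj c = of_real ((cmod c)^2)" for c :: complex by (rule complex_norm_square[symmetric])
  have "herm P1 P2 * herm P2 P3 * herm P3 P1
      = (c1 * cnj c1) * (c2 * cnj c2) * (c3 * cnj c3) * (herm v1 v2 * herm v2 v3 * herm v3 v1)"
    by (simp add: v1(5) v2(5) v3(5) hP algebra_simps)
  also have "\<dots> = of_real (K * (hr v1 v2 * hr v2 v3 * hr v3 v1))"
    unfolding cc K_def using v1(1) v2(1) v3(1) by (simp add: real_herm hr_def)
  finally have "- (herm P1 P2 * herm P2 P3 * herm P3 P1) = - of_real (K * (hr v1 v2 * hr v2 v3 * hr v3 v1))"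
    by (simp only:)
  also have "\<dots> = of_real (- (K * (hr v1 v2 * hr v2 v3 * hr v3 v1)))" by (simp only: of_real_minus)
  finally have eq: "- (herm P1 P2 * herm P2 P3 * herm P3 P1) = of_real (- (K * (hr v1 v2 * hr v2 v3 * hr v3 v1)))" .
  have pos: "- (K * (hr v1 v2 * hr v2 v3 * hr v3 v1)) > 0" using Kp Tn by (simp add: mult_pos_neg)
  have "Arg (of_real (- (K * (hr v1 v2 * hr v2 v3 * hr v3 v1)))) = 0"
    by (subst Arg_of_real) (use pos in simp)
  then show "cartan P1 P2 P3 = 0" unfolding cartan_def eq .
qed

theorem theorem3p3:
  fixes P1 P2 P3 P4 :: "complex^3"
  assumes "null_lift P1" "null_lift P2" "null_lift P3" "null_lift P4"
    and "\<not> same_point P1 P2" "\<not> same_point P1 P3" "\<not> same_point P1 P4"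
    and "\<not> same_point P2 P3" "\<not> same_point P2 P4" "\<not> same_point P3 P4"
  shows "(\<exists>g. unitary21 g \<and> on_Rcircle g P1 \<and> on_Rcircle g P2 \<and>
                 on_Rcircle g P3 \<and> on_Rcircle g P4)
    \<longleftrightarrow>
    (cartan P1 P2 P3 = 0 \<and>
     (let X1 = cross_ratio P1 P2 P3 P4; X2 = cross_ratio P1 P3 P2 P4 in
        X1 \<in> \<real> \<and> X2 \<in> \<real> \<and> Re X1 > 0 \<and> Re X2 > 0 \<and>
        - 2 * (Re X1 + Re X2) - 2 * Re X1 * Re X2 + (Re X1)\<^sup>2 + (Re X2)\<^sup>2 + 1 = 0))"
proof -
  have h12: "herm P1 P2 \<noteq> 0" using herm_nz(1)[OF assms(1,2,5)] .
  have h13: "herm P3 P1 \<noteq> 0" using herm_nz(2)[OF assms(1,3,6)] .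
  have h14: "herm P4 P1 \<noteq> 0" using herm_nz(2)[OF assms(1,4,7)] .
  have h23: "herm P3 P2 \<noteq> 0" using herm_nz(2)[OF assms(2,3,8)] .
  have h23': "herm P2 P3 \<noteq> 0" using herm_nz(1)[OF assms(2,3,8)] .
  have h24: "herm P4 P2 \<noteq> 0" using herm_nz(2)[OF assms(2,4,9)] .
  have h34: "herm P4 P3 \<noteq> 0" using herm_nz(2)[OF assms(3,4,10)] .
  note co = core[OF assms(1-4) h12 h13 h14 h23 h24 h34]
  show ?thesis
  proof
    assume "\<exists>g. unitary21 g \<and> on_Rcircle g P1 \<and> on_Rcircle g P2 \<and>
                 on_Rcircle g P3 \<and> on_Rcircle g P4"
    then obtain g where g: "unitary21 g" "on_Rcircle g P1" "on_Rcircle g P2"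
                 "on_Rcircle g P3" "on_Rcircle g P4" by blast
    note f = forward[OF assms(1-4) h12 h23' h13 g]
    show "cartan P1 P2 P3 = 0 \<and>
     (let X1 = cross_ratio P1 P2 P3 P4; X2 = cross_ratio P1 P3 P2 P4 in
        X1 \<in> \<real> \<and> X2 \<in> \<real> \<and> Re X1 > 0 \<and> Re X2 > 0 \<and>
        - 2 * (Re X1 + Re X2) - 2 * Re X1 * Re X2 + (Re X1)\<^sup>2 + (Re X2)\<^sup>2 + 1 = 0)"
      using f co[OF f] unfolding Let_def by blast
  next
    assume r: "cartan P1 P2 P3 = 0 \<and>
     (let X1 = cross_ratio P1 P2 P3 P4; X2 = cross_ratio P1 P3 P2 P4 in
        X1 \<in> \<real> \<and> X2 \<in> \<real> \<and> Re X1 > 0 \<and> Re X2 > 0 \<and>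
        - 2 * (Re X1 + Re X2) - 2 * Re X1 * Re X2 + (Re X1)\<^sup>2 + (Re X2)\<^sup>2 + 1 = 0)"
    then have "cartan P1 P2 P3 = 0" "cross_ratio P1 P2 P3 P4 \<in> \<real>" "cross_ratio P1 P3 P2 P4 \<in> \<real>"
      unfolding Let_def by blast+
    then show "\<exists>g. unitary21 g \<and> on_Rcircle g P1 \<and> on_Rcircle g P2 \<and>
                 on_Rcircle g P3 \<and> on_Rcircle g P4" using co by blast
  qed
qed

end
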